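(* (1) For $2\le j\le d$, $m\in\mathbb Z$ and $n\in\mathbb Z_{\ge0}$, $v^{1j}(m,n)M_r^{(1)}=\{0\}$. (2) For $2\le i\le j\le d$ and $m,n\in\mathbb Z$ such that $v^{ij}(m,n)\in\mathcal B_+$, $v^{ij}(m,n)M_r^{(1)}=\{0\}$.
   Context: Fix an integer $d\ge 2$ and $r\in\mathbb{C}$. Let $\hat{\mathfrak h}$ be the complex Lie algebra with basis $\{v^i(m)\mid 1\le i\le d,\ m\in\mathbb{Z}\}\cup\{\mathbf c\}$ and bracket $[v^i(m),v^j(n)]=\delta_{m+n,0}\delta_{i,j}\,m\,\mathbf c$, $[\mathbf c,\hat{\mathfrak h}]=0$. In $A=U(\hat{\mathfrak h})/\langle \mathbf c-1\rangle$ let $v^{ij}(m,n)$ be the image of $v^i(m)v^j(n)$; then $v^{ij}(m,n)=v^{ji}(n,m)$ unless $i=j$ and $m=-n$, and $v^{ii}(m,-m)=v^{ii}(-m,m)+m$. Let $\mathcal B=\{v^{ii}(m,n)\mid 1\le i\le d,\ m\le n\}\cup\{v^{ij}(m,n)\mid 1\le i<j\le d,\ m,n\in\mathbb Z\}$; then $\mathcal B\cup\{1\}$ is linearly independent, $\mathcal L:=\mathrm{span}_{\mathbb C}\mathcal B\oplus\mathbb C\subset A$ contains every $v^{ij}(m,n)$ and is closed under $[x,y]=xy-yx$. With $\pi_1,\pi_2$ the projections of $\mathcal L$ onto $\mathrm{span}\,\mathcal B$ and onto $\mathbb C$, $[x,y]_r=\pi_1([x,y])+r\pi_2([x,y])$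 is a Lie bracket on $\mathcal L$; call this Lie algebra $\mathcal L_r$. Let $\mathcal B_+=\{v^{ij}(m,n)\in\mathcal B\mid m\ge 0\text{ or }n\ge 0\}$, $\mathcal L_r^+=\mathrm{span}\,\mathcal B_+\oplus\mathbb C$, and $M_r=U(\mathcal L_r)\otimes_{U(\mathcal L_r^+)}\mathbb C\mathbf 1$, where $\mathcal B_+$ acts by $0$ on $\mathbf 1$ and $s\in\mathbb C\subset\mathcal L_r$ acts by the scalar $s$. Let $\mathcal L_r^{(1)}$ be the Lie subalgebra of $\mathcal L_r$ generated by $\{v^{11}(m,n)\mid m,n\in\mathbb Z,\ m\le n\}$ and $M_r^{(1)}=U(\mathcal L_r^{(1)})\mathbf 1\subset M_r$. *)

theory Defs
  imports Complex_Main
begin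

text \<open>V i j m n stands for the element v^{ij}(m,n) of A; One stands for the
  element 1 of the summand C of L.\<close>

datatype lidx = V nat nat int int | One

definition inB :: "nat \<Rightarrow> lidx \<Rightarrow> bool" where
  "inB d c = (case c of
      V i j m n \<Rightarrow> 1 \<le> i \<and> i \<le> d \<and> 1 \<le> j \<and> j \<le> d \<and> ((i = j \<and> m \<le> n) \<or> i < j)
    | One \<Rightarrow> False)"

definition inL :: "nat \<Rightarrow> lidx \<Rightarrow> bool" where
  "inL d c = (c = One \<or> inB d c)"

definition inBplus :: "nat \<Rightarrow> lidx \<Rightarrow> bool" where
  "inBplus d c = (inB d c \<and> (case c of V i j m n \<Rightarrow> m \<ge> 0 \<or> n \<ge> 0 | One \<Rightarrow> False))"

type_synonym lelem = "lidx \<Rightarrow> complex"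

definition lsingle :: "lidx \<Rightarrow> lelem" where
  "lsingle c = (\<lambda>x. if x = c then 1 else 0)"

text \<open>The element v^{ij}(m,n) of A expressed in the basis B union {1}, using
  v^{ij}(m,n) = v^{ji}(n,m) unless i = j and m = -n, and
  v^{ii}(m,-m) = v^{ii}(-m,m) + m.\<close>
definition quad :: "nat \<Rightarrow> int \<Rightarrow> nat \<Rightarrow> int \<Rightarrow> lelem" where
  "quad i m j n =
     (if i < j then lsingle (V i j m n)
      else if j < i then lsingle (V j i n m)
      else if m \<le> n then lsingle (V i i m n)
      else (\<lambda>x. lsingle (V i i n m) x + (if m = - n then of_int m * lsingle One x else 0)))"

text \<open>Commutator [v^i(m), v^k(p)] = delta_{ik} delta_{m+p,0} m in A (c = 1).\<close>
definition hc :: "nat \<Rightarrow> int \<Rightarrow> nat \<Rightarrow> int \<Rightarrow> complex" where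
  "hc i m k p = (if i = k \<and> m + p = 0 then of_int m else 0)"

text \<open>Commutator in A of two basis elements of L (an element of L):
  [AB, CD] = [B,C] AD + [B,D] AC + [A,C] DB + [A,D] CB, with A = v^i(m),
  B = v^j(n), C = v^k(p), D = v^l(q); the constants are central.\<close>
fun brA :: "lidx \<Rightarrow> lidx \<Rightarrow> lelem" where
  "brA (V i j m n) (V k l p q) =
     (\<lambda>x. hc j n k p * quad i m l q x + hc j n l q * quad i m k p x
        + hc i m k p * quad l q j n x + hc i m l q * quad k p j n x)"
| "brA One _ = (\<lambda>x. 0)"
| "brA _ One = (\<lambda>x. 0)"

text \<open>The bracket [x,y]_r = pi_1([x,y]) + r pi_2([x,y]) on basis elements.\<close>
definition brr :: "complex \<Rightarrow> lidx \<Rightarrow> lidx \<Rightarrow> lelem" where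
  "brr r a b = (\<lambda>x. if x = One then r * brA a b x else brA a b x)"

definition lbr :: "complex \<Rightarrow> lelem \<Rightarrow> lelem \<Rightarrow> lelem" where
  "lbr r f g = (\<lambda>x. \<Sum>a\<in>{a. f a \<noteq> 0}. \<Sum>b\<in>{b. g b \<noteq> 0}. f a * g b * brr r a b x)"

type_synonym telem = "lidx list \<Rightarrow> complex"

definition tmul :: "telem \<Rightarrow> telem \<Rightarrow> telem" where
  "tmul f g = (\<lambda>w. \<Sum>k\<le>length w. f (take k w) * g (drop k w))"

definition wrd :: "lidx list \<Rightarrow> telem" where
  "wrd u = (\<lambda>w. if w = u then 1 else 0)"

definition iota :: "lelem \<Rightarrow> telem" where
  "iota f = (\<lambda>w. if length w = 1 then f (hd w) else 0)"

text \<open>J is the kernel of T(L) \<rightarrow> U(L_r) \<rightarrow> M_r, u \<mapsto> u \<cdot> 1: the span of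
  u (a b - b a - [a,b]_r) w (Lie relations of U(L_r)) and of
  u (x - chi(x)) for x in a basis of L_r^+ (B_+ acts by 0, 1 acts by 1).\<close>
inductive_set Jset :: "nat \<Rightarrow> complex \<Rightarrow> telem set" for d r where
  J_zero: "(\<lambda>w. 0) \<in> Jset d r"
| J_add: "f \<in> Jset d r \<Longrightarrow> g \<in> Jset d r \<Longrightarrow> (\<lambda>w. f w + g w) \<in> Jset d r"
| J_smult: "f \<in> Jset d r \<Longrightarrow> (\<lambda>w. c * f w) \<in> Jset d r"
| J_lie: "inL d a \<Longrightarrow> inL d b \<Longrightarrow>
    tmul (tmul (wrd u) (\<lambda>w. wrd [a, b] w - wrd [b, a] w - iota (brr r a b) w)) (wrd v) \<in> Jset d r"
| J_plus: "inBplus d a \<Longrightarrow> tmul (wrd u) (wrd [a]) \<in> Jset d r"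
| J_one: "tmul (wrd u) (\<lambda>w. wrd [One] w - wrd [] w) \<in> Jset d r"

inductive_set L1set :: "complex \<Rightarrow> lelem set" for r where
  L1_gen: "m \<le> n \<Longrightarrow> lsingle (V 1 1 m n) \<in> L1set r"
| L1_add: "f \<in> L1set r \<Longrightarrow> g \<in> L1set r \<Longrightarrow> (\<lambda>x. f x + g x) \<in> L1set r"
| L1_smult: "f \<in> L1set r \<Longrightarrow> (\<lambda>x. c * f x) \<in> L1set r"
| L1_br: "f \<in> L1set r \<Longrightarrow> g \<in> L1set r \<Longrightarrow> lbr r f g \<in> L1set r"

text \<open>Representatives in T(L) of U(L_r^(1)) 1: the span of x_1 ... x_k with x_i in L_r^(1).\<close>
inductive_set U1set :: "complex \<Rightarrow> telem set" for r where
  U1_one: "wrd [] \<in> U1set r"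
| U1_mul: "x \<in> L1set r \<Longrightarrow> p \<in> U1set r \<Longrightarrow> tmul (iota x) p \<in> U1set r"
| U1_add: "f \<in> U1set r \<Longrightarrow> g \<in> U1set r \<Longrightarrow> (\<lambda>w. f w + g w) \<in> U1set r"
| U1_smult: "f \<in> U1set r \<Longrightarrow> (\<lambda>w. c * f w) \<in> U1set r"

definition annihilates_M1 :: "nat \<Rightarrow> complex \<Rightarrow> lelem \<Rightarrow> bool" where
  "annihilates_M1 d r x = (\<forall>p\<in>U1set r. tmul (iota x) p \<in> Jset d r)"

end

theory Submission
  imports Defs
begin


lemma tmul_wrd_left: "tmul (wrd u) g w = (if take (length u) w = u then g (drop (length u) w) else 0)"
proof -
  have "tmul (wrd u) g w = (\<Sum>k\<in>{..length w}. if k = length u then (if take k w = u then g (drop k w) else 0) else 0)"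
    unfolding tmul_def wrd_def
    by (rule sum.cong) auto
  also have "\<dots> = (if length u \<le> length w then (if take (length u) w = u then g (drop (length u) w) else 0) else 0)"
    by (subst sum.delta) auto
  also have "\<dots> = (if take (length u) w = u then g (drop (length u) w) else 0)"
    by (metis le_cases take_all_iff)
  finally show ?thesis .
qed

lemma tmul_wrd_wrd: "tmul (wrd u) (wrd v) = wrd (u @ v)"
  apply (rule ext) apply (subst tmul_wrd_left) by (auto simp: wrd_def append_eq_conv_conj) (metis append_take_drop_id)

lemma tmul_wrd_Nil: "tmul (wrd []) g = g"
  by (rule ext) (simp add: tmul_wrd_left)

lemma take_app_iff: "take (length u + length v) w = u @ v \<longleftrightarrow> take (length u) w = u \<and> take (length v) (drop (length u) w) = v"
proof
  assume h: "take (length u + length v) w = u @ v"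
  then have l: "length u + length v \<le> length w"
    by (metis length_append length_take min.bounded_iff order.refl)
  then have "length (take (length u) w) = length u" by simp
  moreover have "take (length u) w @ take (length v) (drop (length u) w) = u @ v"
    using h by (simp add: take_add)
  ultimately show "take (length u) w = u \<and> take (length v) (drop (length u) w) = v"
    using append_eq_append_conv by blast
next
  assume "take (length u) w = u \<and> take (length v) (drop (length u) w) = v"
  then show "take (length u + length v) w = u @ v" by (simp add: take_add)
qed

lemma tmul_wrd_wrd_assoc: "tmul (wrd u) (tmul (wrd v) g) = tmul (wrd (u @ v)) g"
proof (rule ext)
  fix w
  show "tmul (wrd u) (tmul (wrd v) g) w = tmul (wrd (u @ v)) g w"
    unfolding tmul_wrd_left using take_app_iff[of u v w]
    by (auto simp: add.commute)
qed

lemma tmul_Nil_right: "tmul f (wrd []) = f"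
proof (rule ext)
  fix w
  have "tmul f (wrd []) w = (\<Sum>k\<in>{..length w}. if k = length w then f (take k w) else 0)"
    unfolding tmul_def wrd_def by (rule sum.cong) auto
  also have "\<dots> = f w" by (subst sum.delta) auto
  finally show "tmul f (wrd []) w = f w" .
qed

lemma tmul_sum_right: "tmul f (\<lambda>w. \<Sum>i\<in>I. c i * F i w) = (\<lambda>w. \<Sum>i\<in>I. c i * tmul f (F i) w)"
  unfolding tmul_def by (rule ext) (simp add: sum_distrib_left sum.swap[of _ I] mult.left_commute)

lemma tmul_sum_left: "tmul (\<lambda>w. \<Sum>i\<in>I. c i * F i w) g = (\<lambda>w. \<Sum>i\<in>I. c i * tmul (F i) g w)"
  unfolding tmul_def by (rule ext) (simp add: sum_distrib_left sum_distrib_right sum.swap[of _ I] mult.assoc)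

lemma tmul_add_right: "tmul f (\<lambda>w. g w + h w) = (\<lambda>w. tmul f g w + tmul f h w)"
  unfolding tmul_def by (rule ext) (simp add: distrib_left sum.distrib)

lemma tmul_smult_right: "tmul f (\<lambda>w. c * g w) = (\<lambda>w. c * tmul f g w)"
  unfolding tmul_def by (rule ext) (simp add: sum_distrib_left mult.left_commute)

lemma tmul_diff_right: "tmul f (\<lambda>w. g w - h w) = (\<lambda>w. tmul f g w - tmul f h w)"
  unfolding tmul_def by (rule ext) (simp add: right_diff_distrib sum_subtractf)

lemma tmul_diff_left: "tmul (\<lambda>w. g w - h w) f = (\<lambda>w. tmul g f w - tmul h f w)"
  unfolding tmul_def by (rule ext) (simp add: left_diff_distrib sum_subtractf)

lemma expand_telem: "finite {v. f v \<noteq> 0} \<Longrightarrow> f = (\<lambda>w. \<Sum>v\<in>{v. f v \<noteq> 0}. f v * wrd v w)"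
proof (rule ext)
  fix w assume "finite {v. f v \<noteq> 0}"
  have "(\<Sum>v\<in>{v. f v \<noteq> 0}. f v * wrd v w) = (\<Sum>v\<in>{v. f v \<noteq> 0}. if v = w then f w else 0)"
    unfolding wrd_def by (rule sum.cong) auto
  also have "\<dots> = f w" using \<open>finite {v. f v \<noteq> 0}\<close> by (subst sum.delta) auto
  finally show "f w = (\<Sum>v\<in>{v. f v \<noteq> 0}. f v * wrd v w)" by simp
qed

lemma expand_iota: "finite {a. x a \<noteq> 0} \<Longrightarrow> iota x = (\<lambda>w. \<Sum>a\<in>{a. x a \<noteq> 0}. x a * wrd [a] w)"
proof (rule ext)
  fix w assume "finite {a. x a \<noteq> 0}"
  show "iota x w = (\<Sum>a\<in>{a. x a \<noteq> 0}. x a * wrd [a] w)"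
  proof (cases "length w = 1")
    case True
    then obtain c where w: "w = [c]" by (cases w) auto
    have "(\<Sum>a\<in>{a. x a \<noteq> 0}. x a * wrd [a] w) = (\<Sum>a\<in>{a. x a \<noteq> 0}. if a = c then x c else 0)"
      unfolding wrd_def w by (rule sum.cong) auto
    also have "\<dots> = x c" using \<open>finite {a. x a \<noteq> 0}\<close> by (subst sum.delta) auto
    finally show ?thesis by (simp add: iota_def w)
  next
    case False
    then show ?thesis by (auto simp: iota_def wrd_def intro!: sum.neutral)
  qed
qed

lemma J_sum: "finite I \<Longrightarrow> (\<forall>i\<in>I. F i \<in> Jset d r) \<Longrightarrow> (\<lambda>w. \<Sum>i\<in>I. c i * F i w) \<in> Jset d r"
proof (induction I rule: finite_induct)
  case empty
  then show ?case by (simp add: Jset.J_zero)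
next
  case (insert i I)
  have "(\<lambda>w. c i * F i w) \<in> Jset d r" using insert by (simp add: Jset.J_smult)
  then have "(\<lambda>w. (\<lambda>w. c i * F i w) w + (\<lambda>w. \<Sum>i\<in>I. c i * F i w) w) \<in> Jset d r"
    using insert by (intro Jset.J_add) auto
  then show ?case using insert by simp
qed

lemma J_add3: "f \<in> Jset d r \<Longrightarrow> g \<in> Jset d r \<Longrightarrow> h \<in> Jset d r \<Longrightarrow> (\<lambda>w. f w + g w + h w) \<in> Jset d r"
  using Jset.J_add[of "\<lambda>w. f w + g w" d r h] Jset.J_add[of f d r g] by simp

lemma supp_tmul: "{w. tmul f g w \<noteq> 0} \<subseteq> (\<lambda>(a,b). a @ b) ` ({a. f a \<noteq> 0} \<times> {b. g b \<noteq> 0})"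
proof
  fix w assume "w \<in> {w. tmul f g w \<noteq> 0}"
  then have "(\<Sum>k\<le>length w. f (take k w) * g (drop k w)) \<noteq> 0" by (simp add: tmul_def)
  then obtain k where "f (take k w) * g (drop k w) \<noteq> 0" by (meson sum.neutral)
  then have "(take k w, drop k w) \<in> {a. f a \<noteq> 0} \<times> {b. g b \<noteq> 0}" by auto
  then show "w \<in> (\<lambda>(a,b). a @ b) ` ({a. f a \<noteq> 0} \<times> {b. g b \<noteq> 0})"
    by (metis (no_types, lifting) append_take_drop_id case_prod_conv image_eqI)
qed

lemma finite_tmul: "finite {a. f a \<noteq> 0} \<Longrightarrow> finite {b. g b \<noteq> 0} \<Longrightarrow> finite {w. tmul f g w \<noteq> 0}"
  by (rule finite_subset[OF supp_tmul]) auto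

lemma finite_iota: "finite {a. x a \<noteq> 0} \<Longrightarrow> finite {w. iota x w \<noteq> 0}"
proof -
  assume f: "finite {a. x a \<noteq> 0}"
  have "{w. iota x w \<noteq> 0} \<subseteq> (\<lambda>a. [a]) ` {a. x a \<noteq> 0}"
  proof
    fix w assume "w \<in> {w. iota x w \<noteq> 0}"
    then have "length w = 1" "x (hd w) \<noteq> 0" by (auto simp: iota_def split: if_splits)
    then show "w \<in> (\<lambda>a. [a]) ` {a. x a \<noteq> 0}"
      by (cases w) auto
  qed
  then show ?thesis using f finite_subset by blast
qed

lemma expand_eq: "finite {v. f v \<noteq> 0} \<Longrightarrow> (\<lambda>w. \<Sum>v\<in>{v. f v \<noteq> 0}. f v * wrd v w) = f"
  by (rule expand_telem[THEN sym])

lemma tmul_assoc_wrd_gen: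
  "tmul (tmul (wrd u) (\<lambda>w. \<Sum>v\<in>S. c v * wrd v w)) g = tmul (wrd u) (tmul (\<lambda>w. \<Sum>v\<in>S. c v * wrd v w) g)"
  by (simp add: tmul_sum_right tmul_sum_left tmul_wrd_wrd tmul_wrd_wrd_assoc)

lemma tmul_assoc_wrd: "finite {v. h v \<noteq> 0} \<Longrightarrow> tmul (tmul (wrd u) h) g = tmul (wrd u) (tmul h g)"
  using tmul_assoc_wrd_gen[of u h "{v. h v \<noteq> 0}" g] by (simp only: expand_eq)

lemma J_lie_gen:
  assumes "inL d a" "inL d b" "finite {v. g v \<noteq> 0}"
  shows "tmul (tmul (wrd u) (\<lambda>w. wrd [a, b] w - wrd [b, a] w - iota (brr r a b) w)) g \<in> Jset d r"
proof -
  let ?F = "tmul (wrd u) (\<lambda>w. wrd [a, b] w - wrd [b, a] w - iota (brr r a b) w)"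
  have "(\<lambda>w. \<Sum>v\<in>{v. g v \<noteq> 0}. g v * tmul ?F (wrd v) w) \<in> Jset d r"
    using assms by (simp add: J_sum Jset.J_lie)
  then have "tmul ?F (\<lambda>w. \<Sum>v\<in>{v. g v \<noteq> 0}. g v * wrd v w) \<in> Jset d r"
    by (simp only: tmul_sum_right)
  then show ?thesis using assms(3) by (simp only: expand_eq)
qed


definition Lb :: "lidx \<Rightarrow> bool" where
  "Lb b = (b = One \<or> (\<exists>p q. b = V 1 1 p q \<and> p \<le> q))"

lemma supp_quad: "quad i m j n z \<noteq> 0 \<Longrightarrow> z \<in> {V i j m n, V j i n m, One}"
  by (auto simp: quad_def lsingle_def split: if_splits)

lemma supp_brr: "brr r (V i j m n) (V k l p q) z \<noteq> 0 \<Longrightarrow>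
  quad i m l q z \<noteq> 0 \<or> quad i m k p z \<noteq> 0 \<or> quad l q j n z \<noteq> 0 \<or> quad k p j n z \<noteq> 0"
  by (auto simp: brr_def split: if_splits)

lemma brr_One1: "brr r One b = (\<lambda>z. 0)" by (rule ext) (simp add: brr_def)
lemma brr_One2: "brr r a One = (\<lambda>z. 0)" by (cases a) (auto simp: brr_def)

lemma finite_brr: "finite {z. brr r a b z \<noteq> 0}"
proof (cases a)
  case (V i j m n)
  show ?thesis
  proof (cases b)
    case (V k l p q)
    have "{z. brr r a b z \<noteq> 0} \<subseteq> {V i l m q, V l i q m, V i k m p, V k i p m, V l j q n, V j l n q, V k j p n, V j k n p, One}"
    proof
      fix z assume "z \<in> {z. brr r a b z \<noteq> 0}"
      then have "brr r (V i j m n) (V k l p q) z \<noteq> 0" using \<open>a = _\<close> V by simp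
      then have "quad i m l q z \<noteq> 0 \<or> quad i m k p z \<noteq> 0 \<or> quad l q j n z \<noteq> 0 \<or> quad k p j n z \<noteq> 0"
        by (rule supp_brr)
      then show "z \<in> {V i l m q, V l i q m, V i k m p, V k i p m, V l j q n, V j l n q, V k j p n, V j k n p, One}"
        using supp_quad[of i m l q z] supp_quad[of i m k p z] supp_quad[of l q j n z] supp_quad[of k p j n z]
        by blast
    qed
    then show ?thesis using finite_subset by blast
  next
    case One then show ?thesis by (simp add: brr_One2)
  qed
next
  case One then show ?thesis by (simp add: brr_One1)
qed

lemma Lb_brr: "Lb a \<Longrightarrow> Lb b \<Longrightarrow> brr r a b z \<noteq> 0 \<Longrightarrow> Lb z"
  unfolding Lb_def
  by (auto simp: brr_def quad_def lsingle_def hc_def split: if_splits)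

lemma supp_lbr: "lbr r f g z \<noteq> 0 \<Longrightarrow> \<exists>a b. f a \<noteq> 0 \<and> g b \<noteq> 0 \<and> brr r a b z \<noteq> 0"
proof -
  assume "lbr r f g z \<noteq> 0"
  then have "(\<Sum>a\<in>{a. f a \<noteq> 0}. \<Sum>b\<in>{b. g b \<noteq> 0}. f a * g b * brr r a b z) \<noteq> 0"
    by (simp add: lbr_def)
  then obtain a where a: "a \<in> {a. f a \<noteq> 0}" "(\<Sum>b\<in>{b. g b \<noteq> 0}. f a * g b * brr r a b z) \<noteq> 0"
    by (rule sum.not_neutral_contains_not_neutral)
  from a(2) obtain b where b: "b \<in> {b. g b \<noteq> 0}" "f a * g b * brr r a b z \<noteq> 0"
    by (rule sum.not_neutral_contains_not_neutral)
  then show ?thesis using a by auto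
qed

lemma L1_supp: "f \<in> L1set r \<Longrightarrow> finite {a. f a \<noteq> 0} \<and> (\<forall>a. f a \<noteq> 0 \<longrightarrow> Lb a)"
proof (induction rule: L1set.induct)
  case (L1_gen m n)
  have "{a. lsingle (V 1 1 m n) a \<noteq> 0} = {V 1 1 m n}" by (auto simp: lsingle_def)
  then show ?case using L1_gen by (auto simp: lsingle_def Lb_def)
next
  case (L1_add f g)
  have "{a. f a + g a \<noteq> 0} \<subseteq> {a. f a \<noteq> 0} \<union> {a. g a \<noteq> 0}" by auto
  moreover have "\<forall>a. f a + g a \<noteq> 0 \<longrightarrow> Lb a" using L1_add by (metis add.left_neutral)
  moreover have "finite {a. f a + g a \<noteq> 0}" using L1_add.IH calculation(1) by (simp add: finite_subset)
  ultimately show ?case by blast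
next
  case (L1_smult f c)
  have "{a. c * f a \<noteq> 0} \<subseteq> {a. f a \<noteq> 0}" by auto
  then have "finite {a. c * f a \<noteq> 0}" using L1_smult.IH by (rule finite_subset[OF _ conjunct1])
  moreover have "\<forall>a. c * f a \<noteq> 0 \<longrightarrow> Lb a" using L1_smult.IH by simp
  ultimately show ?case by (rule conjI)
next
  case (L1_br f g)
  have "{z. lbr r f g z \<noteq> 0} \<subseteq> (\<Union>a\<in>{a. f a \<noteq> 0}. \<Union>b\<in>{b. g b \<noteq> 0}. {z. brr r a b z \<noteq> 0})"
  proof
    fix z assume "z \<in> {z. lbr r f g z \<noteq> 0}"
    then obtain a b where "f a \<noteq> 0" "g b \<noteq> 0" "brr r a b z \<noteq> 0" using supp_lbr by blast
    then show "z \<in> (\<Union>a\<in>{a. f a \<noteq> 0}. \<Union>b\<in>{b. g b \<noteq> 0}. {z. brr r a b z \<noteq> 0})" by blast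
  qed
  moreover have "finite (\<Union>a\<in>{a. f a \<noteq> 0}. \<Union>b\<in>{b. g b \<noteq> 0}. {z. brr r a b z \<noteq> 0})"
  proof (rule finite_UN_I)
    show "finite {a. f a \<noteq> 0}" using L1_br.IH(1) by (rule conjunct1)
    fix a show "finite (\<Union>b\<in>{b. g b \<noteq> 0}. {z. brr r a b z \<noteq> 0})"
    proof (rule finite_UN_I)
      show "finite {b. g b \<noteq> 0}" using L1_br.IH(2) by (rule conjunct1)
      fix b show "finite {z. brr r a b z \<noteq> 0}" by (rule finite_brr)
    qed
  qed
  moreover have "\<forall>z. lbr r f g z \<noteq> 0 \<longrightarrow> Lb z"
  proof (intro allI impI)
    fix z assume "lbr r f g z \<noteq> 0"
    then obtain a b where "f a \<noteq> 0" "g b \<noteq> 0" "brr r a b z \<noteq> 0" using supp_lbr by blast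
    then show "Lb z" using L1_br Lb_brr by blast
  qed
  ultimately show ?case using finite_subset by blast
qed

lemma U1_fin: "p \<in> U1set r \<Longrightarrow> finite {w. p w \<noteq> 0}"
proof (induction rule: U1set.induct)
  case U1_one
  have "{w. wrd [] w \<noteq> 0} = {[]}" by (auto simp: wrd_def)
  then show ?case by simp
next
  case (U1_mul x p)
  then show ?case using finite_tmul finite_iota L1_supp by blast
next
  case (U1_add f g)
  have "{a. f a + g a \<noteq> 0} \<subseteq> {a. f a \<noteq> 0} \<union> {a. g a \<noteq> 0}" by auto
  then show ?case using U1_add.IH by (simp add: finite_subset)
next
  case (U1_smult f c)
  have "{a. c * f a \<noteq> 0} \<subseteq> {a. f a \<noteq> 0}" by auto
  then show ?case using U1_smult.IH by (rule finite_subset)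
qed



lemma K_gen: "tmul (wrd u) (tmul (\<lambda>w. \<Sum>a\<in>S. c a * wrd [a] w) h) = (\<lambda>w. \<Sum>a\<in>S. c a * tmul (wrd (u @ [a])) h w)"
  by (simp add: tmul_sum_left tmul_sum_right tmul_wrd_wrd_assoc)

lemma K: "finite {a. x a \<noteq> 0} \<Longrightarrow>
  tmul (wrd u) (tmul (iota x) h) = (\<lambda>w. \<Sum>a\<in>{a. x a \<noteq> 0}. x a * tmul (wrd (u @ [a])) h w)"
  by (simp only: expand_iota K_gen)

lemma iota_lsingle: "iota (lsingle a) = wrd [a]"
proof (rule ext)
  fix w show "iota (lsingle a) w = wrd [a] w"
    by (cases w) (auto simp: iota_def lsingle_def wrd_def)
qed

lemma main:
  assumes T1: "\<And>c. T c \<Longrightarrow> inBplus d c"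
    and T2: "\<And>c b z. T c \<Longrightarrow> Lb b \<Longrightarrow> brr r c b z \<noteq> 0 \<Longrightarrow> T z"
    and d1: "1 \<le> d"
  shows "p \<in> U1set r \<Longrightarrow> \<forall>u x. finite {c. x c \<noteq> 0} \<and> (\<forall>c. x c \<noteq> 0 \<longrightarrow> T c)
           \<longrightarrow> tmul (wrd u) (tmul (iota x) p) \<in> Jset d r"
proof (induction p rule: U1set.induct)
  case U1_one
  show ?case
  proof (intro allI impI)
    fix u and x :: lelem assume S: "finite {c. x c \<noteq> 0} \<and> (\<forall>c. x c \<noteq> 0 \<longrightarrow> T c)"
    have "(\<lambda>w. \<Sum>a\<in>{a. x a \<noteq> 0}. x a * tmul (wrd (u @ [a])) (wrd []) w) \<in> Jset d r"
    proof (rule J_sum)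
      show "finite {a. x a \<noteq> 0}" using S by simp
      show "\<forall>a\<in>{a. x a \<noteq> 0}. tmul (wrd (u @ [a])) (wrd []) \<in> Jset d r"
      proof
        fix a assume "a \<in> {a. x a \<noteq> 0}"
        then have "inBplus d a" using S T1 by auto
        then have "tmul (wrd u) (wrd [a]) \<in> Jset d r" by (rule Jset.J_plus)
        then show "tmul (wrd (u @ [a])) (wrd []) \<in> Jset d r"
          by (simp add: tmul_Nil_right tmul_wrd_wrd)
      qed
    qed
    then show "tmul (wrd u) (tmul (iota x) (wrd [])) \<in> Jset d r"
      using S by (simp only: K)
  qed
next
  case (U1_mul y p)
  have finp: "finite {w. p w \<noteq> 0}" using U1_mul.hyps(2) by (rule U1_fin)
  have y: "finite {b. y b \<noteq> 0} \<and> (\<forall>b. y b \<noteq> 0 \<longrightarrow> Lb b)" using U1_mul.hyps(1) by (rule L1_supp)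
  have basis: "tmul (wrd (u @ [a, b])) p \<in> Jset d r" if a: "T a" and b: "Lb b" for u a b
  proof -
    let ?\<beta> = "brr r a b"
    have inLa: "inL d a" using T1[OF a] by (simp add: inL_def inBplus_def)
    have inLb: "inL d b" using b d1 by (auto simp: inL_def inB_def Lb_def)
    have E3: "tmul (tmul (wrd u) (\<lambda>w. wrd [a, b] w - wrd [b, a] w - iota ?\<beta> w)) p \<in> Jset d r"
      using inLa inLb finp by (rule J_lie_gen)
    have finb: "finite {z. ?\<beta> z \<noteq> 0}" by (rule finite_brr)
    have "tmul (tmul (wrd u) (\<lambda>w. wrd [a, b] w - wrd [b, a] w - iota ?\<beta> w)) p
        = tmul (\<lambda>w. wrd (u @ [a, b]) w - wrd (u @ [b, a]) w - tmul (wrd u) (iota ?\<beta>) w) p"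
      by (simp only: tmul_diff_right tmul_wrd_wrd)
    also have "\<dots> = (\<lambda>w. tmul (wrd (u @ [a, b])) p w - tmul (wrd (u @ [b, a])) p w - tmul (tmul (wrd u) (iota ?\<beta>)) p w)"
      by (simp only: tmul_diff_left)
    also have "\<dots> = (\<lambda>w. tmul (wrd (u @ [a, b])) p w - tmul (wrd (u @ [b, a])) p w - tmul (wrd u) (tmul (iota ?\<beta>) p) w)"
      using finite_iota[OF finb] by (simp only: tmul_assoc_wrd)
    finally have eq: "tmul (tmul (wrd u) (\<lambda>w. wrd [a, b] w - wrd [b, a] w - iota ?\<beta> w)) p
        = (\<lambda>w. tmul (wrd (u @ [a, b])) p w - tmul (wrd (u @ [b, a])) p w - tmul (wrd u) (tmul (iota ?\<beta>) p) w)" .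
    have "tmul (wrd (u @ [b]) ) (tmul (iota (lsingle a)) p) \<in> Jset d r"
      using U1_mul.IH a by (auto simp: lsingle_def)
    then have E1: "tmul (wrd (u @ [b, a])) p \<in> Jset d r"
      by (simp add: iota_lsingle tmul_wrd_wrd_assoc)
    have E2: "tmul (wrd u) (tmul (iota ?\<beta>) p) \<in> Jset d r"
      using U1_mul.IH finb T2[OF a b] by blast
    have "(\<lambda>w. tmul (tmul (wrd u) (\<lambda>w. wrd [a, b] w - wrd [b, a] w - iota ?\<beta> w)) p w
             + tmul (wrd (u @ [b, a])) p w + tmul (wrd u) (tmul (iota ?\<beta>) p) w) \<in> Jset d r"
      using E3 E1 E2 by (rule J_add3)
    then show ?thesis by (simp add: eq)
  qed
  show ?case
  proof (intro allI impI)
    fix u and x :: lelem assume S: "finite {c. x c \<noteq> 0} \<and> (\<forall>c. x c \<noteq> 0 \<longrightarrow> T c)"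
    have "(\<lambda>w. \<Sum>a\<in>{a. x a \<noteq> 0}. x a * tmul (wrd (u @ [a])) (tmul (iota y) p) w) \<in> Jset d r"
    proof (rule J_sum)
      show "finite {a. x a \<noteq> 0}" using S by simp
      show "\<forall>a\<in>{a. x a \<noteq> 0}. tmul (wrd (u @ [a])) (tmul (iota y) p) \<in> Jset d r"
      proof
        fix a assume "a \<in> {a. x a \<noteq> 0}"
        then have Ta: "T a" using S by auto
        have "(\<lambda>w. \<Sum>b\<in>{b. y b \<noteq> 0}. y b * tmul (wrd ((u @ [a]) @ [b])) p w) \<in> Jset d r"
        proof (rule J_sum)
          show "finite {b. y b \<noteq> 0}" using y by simp
          show "\<forall>b\<in>{b. y b \<noteq> 0}. tmul (wrd ((u @ [a]) @ [b])) p \<in> Jset d r"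
            using basis Ta y by simp
        qed
        then show "tmul (wrd (u @ [a])) (tmul (iota y) p) \<in> Jset d r"
          using y by (simp only: K)
      qed
    qed
    then show "tmul (wrd u) (tmul (iota x) (tmul (iota y) p)) \<in> Jset d r"
      using S by (simp only: K)
  qed
next
  case (U1_add f g)
  show ?case
  proof (intro allI impI)
    fix u and x :: lelem assume S: "finite {c. x c \<noteq> 0} \<and> (\<forall>c. x c \<noteq> 0 \<longrightarrow> T c)"
    have "(\<lambda>w. tmul (wrd u) (tmul (iota x) f) w + tmul (wrd u) (tmul (iota x) g) w) \<in> Jset d r"
      using U1_add.IH S by (intro Jset.J_add) auto
    then show "tmul (wrd u) (tmul (iota x) (\<lambda>w. f w + g w)) \<in> Jset d r"
      by (simp only: tmul_add_right)
  qed
next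
  case (U1_smult f c)
  show ?case
  proof (intro allI impI)
    fix u and x :: lelem assume S: "finite {c. x c \<noteq> 0} \<and> (\<forall>c. x c \<noteq> 0 \<longrightarrow> T c)"
    have "(\<lambda>w. c * tmul (wrd u) (tmul (iota x) f) w) \<in> Jset d r"
      using U1_smult.IH S by (intro Jset.J_smult) auto
    then show "tmul (wrd u) (tmul (iota x) (\<lambda>w. c * f w)) \<in> Jset d r"
      by (simp only: tmul_smult_right)
  qed
qed

lemma annih:
  assumes T1: "\<And>c. T c \<Longrightarrow> inBplus d c"
    and T2: "\<And>c b z. T c \<Longrightarrow> Lb b \<Longrightarrow> brr r c b z \<noteq> 0 \<Longrightarrow> T z"
    and d1: "1 \<le> d" and c: "T c"
  shows "annihilates_M1 d r (lsingle c)"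
  unfolding annihilates_M1_def
proof
  fix p assume p: "p \<in> U1set r"
  have "{a. lsingle c a \<noteq> 0} = {c}" by (auto simp: lsingle_def)
  then have "finite {a. lsingle c a \<noteq> 0} \<and> (\<forall>a. lsingle c a \<noteq> 0 \<longrightarrow> T a)"
    using c by auto
  then have "tmul (wrd []) (tmul (iota (lsingle c)) p) \<in> Jset d r"
  proof -
    have M: "\<forall>u x. finite {c. x c \<noteq> 0} \<and> (\<forall>c. x c \<noteq> 0 \<longrightarrow> T c)
           \<longrightarrow> tmul (wrd u) (tmul (iota x) p) \<in> Jset d r"
      by (rule main[where T=T]) (fact T1, fact T2, fact d1, fact p)
    then show ?thesis using \<open>finite {a. lsingle c a \<noteq> 0} \<and> _\<close> by blast
  qed
  then show "tmul (iota (lsingle c)) p \<in> Jset d r" by (simp add: tmul_wrd_Nil)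
qed

theorem lemma4p6:
  fixes d :: nat and r :: complex
  assumes "2 \<le> d"
  shows "(\<forall>j m n. 2 \<le> j \<and> j \<le> d \<and> 0 \<le> n \<longrightarrow> annihilates_M1 d r (quad 1 m j n))
       \<and> (\<forall>i j m n. 2 \<le> i \<and> i \<le> j \<and> j \<le> d \<and> inBplus d (V i j m n)
            \<longrightarrow> annihilates_M1 d r (quad i m j n))"
proof (intro conjI allI impI)
  fix j :: nat and m n :: int assume h: "2 \<le> j \<and> j \<le> d \<and> 0 \<le> n"
  let ?T = "\<lambda>c. \<exists>m' n'. c = V 1 j m' n' \<and> 0 \<le> n'"
  have "annihilates_M1 d r (lsingle (V 1 j m n))"
  proof (rule annih[where T = ?T])
    fix c assume "?T c" then show "inBplus d c" using h by (auto simp: inBplus_def inB_def)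
  next
    fix c b z assume c: "?T c" and b: "Lb b" and z: "brr r c b z \<noteq> 0"
    show "?T z"
    proof (cases "b = One")
      case True then show ?thesis using z by (simp add: brr_One2)
    next
      case False
      then obtain p q where bpq: "b = V 1 1 p q" using b by (auto simp: Lb_def)
      obtain m' n' where cmn: "c = V 1 j m' n'" "0 \<le> n'" using c by blast
      show ?thesis using z h cmn bpq
        by (auto simp: brr_def hc_def quad_def lsingle_def split: if_splits)
    qed
  next
    show "1 \<le> d" using assms by simp
  next
    show "?T (V 1 j m n)" using h by blast
  qed
  moreover have "quad 1 m j n = lsingle (V 1 j m n)" using h by (simp add: quad_def)
  ultimately show "annihilates_M1 d r (quad 1 m j n)" by simp
next
  fix i j :: nat and m n :: int assume h: "2 \<le> i \<and> i \<le> j \<and> j \<le> d \<and> inBplus d (V i j m n)"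
  have "annihilates_M1 d r (lsingle (V i j m n))"
  proof (rule annih[where T = "\<lambda>c. c = V i j m n"])
    fix c assume "c = V i j m n" then show "inBplus d c" using h by simp
  next
    fix c b z assume c: "c = V i j m n" and b: "Lb b" and z: "brr r c b z \<noteq> 0"
    show "z = V i j m n"
    proof (cases "b = One")
      case True then show ?thesis using z by (simp add: brr_One2)
    next
      case False
      then obtain p q where bpq: "b = V 1 1 p q" using b by (auto simp: Lb_def)
      have "brr r c b z = 0" using h c bpq by (simp add: brr_def hc_def)
      then show ?thesis using z by simp
    qed
  next
    show "1 \<le> d" using assms by simp
  qed simp
  moreover have "quad i m j n = lsingle (V i j m n)"
    using h by (auto simp: quad_def inBplus_def inB_def)
  ultimately show "annihilates_M1 d r (quad i m j n)" by simp
qed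

end
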